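(* Let $(V,c)$ be a network and $\Omega\subset V$ a finite subset of size $n$. Let $(\lambda_i,u_i)_{i=1}^n$ be a Dirichlet system for $\Omega$. Let $\mathcal H$ be a real Hilbert space and $\alpha:V\to\mathcal H$. Then for any $k<n$, $$\sum_{i=1}^k(\lambda_{k+1}-\lambda_i)^2\Big(\langle\Gamma(\alpha),u_i^2\rangle-\Lambda(\alpha,u_i)\Big)\le\sum_{i=1}^k(\lambda_{k+1}-\lambda_i)\,\big\|u_i\cdot\Delta\alpha-2\Gamma(\alpha,u_i)\big\|^2.$$
   Context: A network is a pair $(V,c)$ with $V$ countable and $c:V\times V\to[0,\infty)$ symmetric with $\pi(x):=\sum_y c(x,y)<\infty$. Set $P(x,y)=c(x,y)/\pi(x)$ and, for functions $f$ (real- or $\mathcal H$-valued), $\Delta f(x)=\sum_yP(x,y)(f(x)-f(y))$. For real $u$, $\langle f,g\rangle=\sum_x\pi(x)f(x)g(x)$. For $\alpha:V\to\mathcal H$ and real $u:V\to\mathbb R$ define: $2\Gamma(\alpha,u)(x)=\sum_yP(x,y)(u(x)-u(y))(\alpha(x)-\alpha(y))\in\mathcal H$; $2\Gamma(\alpha)(x)=\sum_yP(x,y)\|\alpha(x)-\alpha(y)\|_{\mathcal H}^2$; $\langle\Gamma(\alpha),u^2\rangle=\sum_x\pi(x)\Gamma(\alpha)(x)u(x)^2$; for $\beta:V\to\mathcal H$, $\|\beta\|^2=\sum_x\pi(x)\|\beta(x)\|_{\mathcal H}^2$; and $\Lambda(\alpha,u)=\frac14\sum_{x,y}c(x,y)|u(x)-u(y)|^2\|\alpha(x)-\alpha(y)\|_{\mathcal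 H}^2$. For finite $\Omega\subset V$ with $|\Omega|=n$, let $\Delta_\Omega f=\mathbf 1_\Omega\cdot\Delta f$ be the Dirichlet Laplacian on the space of functions vanishing outside $\Omega$. A Dirichlet system for $\Omega$ is $(\lambda_i,u_i)_{i=1}^n$ with $\lambda_1\le\cdots\le\lambda_n$ the eigenvalues of $\Delta_\Omega$, $u_i$ real-valued, vanishing outside $\Omega$, $\Delta_\Omega u_i=\lambda_iu_i$, and $\langle u_i,u_j\rangle=\mathbf 1_{i=j}$. *)

theory Defs
  imports "HOL-Analysis.Analysis"
begin

definition network :: "('v::countable \<Rightarrow> 'v \<Rightarrow> real) \<Rightarrow> bool" where
  "network c \<longleftrightarrow> (\<forall>x y. 0 \<le> c x y) \<and> (\<forall>x y. c x y = c y x) \<and>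
     (\<forall>x. (\<lambda>y. c x y) summable_on UNIV)"

definition npi :: "('v \<Rightarrow> 'v \<Rightarrow> real) \<Rightarrow> 'v \<Rightarrow> real" where
  "npi c x = (\<Sum>\<^sub>\<infinity>y. c x y)"

definition trans_prob :: "('v \<Rightarrow> 'v \<Rightarrow> real) \<Rightarrow> 'v \<Rightarrow> 'v \<Rightarrow> real" where
  "trans_prob c x y = c x y / npi c x"

definition lap :: "('v \<Rightarrow> 'v \<Rightarrow> real) \<Rightarrow> ('v \<Rightarrow> 'h::real_normed_vector) \<Rightarrow> 'v \<Rightarrow> 'h" where
  "lap c f x = (\<Sum>\<^sub>\<infinity>y. trans_prob c x y *\<^sub>R (f x - f y))"

definition nip :: "('v \<Rightarrow> 'v \<Rightarrow> real) \<Rightarrow> ('v \<Rightarrow> real) \<Rightarrow> ('v \<Rightarrow> real) \<Rightarrow> real" where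
  "nip c f g = (\<Sum>\<^sub>\<infinity>x. npi c x * f x * g x)"

definition Gamma2 :: "('v \<Rightarrow> 'v \<Rightarrow> real) \<Rightarrow> ('v \<Rightarrow> 'h::real_normed_vector) \<Rightarrow> ('v \<Rightarrow> real) \<Rightarrow> 'v \<Rightarrow> 'h" where
  "Gamma2 c \<alpha> u x = (1/2) *\<^sub>R (\<Sum>\<^sub>\<infinity>y. trans_prob c x y *\<^sub>R ((u x - u y) *\<^sub>R (\<alpha> x - \<alpha> y)))"

definition Gamma1 :: "('v \<Rightarrow> 'v \<Rightarrow> real) \<Rightarrow> ('v \<Rightarrow> 'h::real_normed_vector) \<Rightarrow> 'v \<Rightarrow> real" where
  "Gamma1 c \<alpha> x = (1/2) * (\<Sum>\<^sub>\<infinity>y. trans_prob c x y * (norm (\<alpha> x - \<alpha> y))\<^sup>2)"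

definition Gamma_u2 :: "('v \<Rightarrow> 'v \<Rightarrow> real) \<Rightarrow> ('v \<Rightarrow> 'h::real_normed_vector) \<Rightarrow> ('v \<Rightarrow> real) \<Rightarrow> real" where
  "Gamma_u2 c \<alpha> u = (\<Sum>\<^sub>\<infinity>x. npi c x * Gamma1 c \<alpha> x * (u x)\<^sup>2)"

definition nnormsq :: "('v \<Rightarrow> 'v \<Rightarrow> real) \<Rightarrow> ('v \<Rightarrow> 'h::real_normed_vector) \<Rightarrow> real" where
  "nnormsq c \<beta> = (\<Sum>\<^sub>\<infinity>x. npi c x * (norm (\<beta> x))\<^sup>2)"

definition Lambda :: "('v \<Rightarrow> 'v \<Rightarrow> real) \<Rightarrow> ('v \<Rightarrow> 'h::real_normed_vector) \<Rightarrow> ('v \<Rightarrow> real) \<Rightarrow> real" where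
  "Lambda c \<alpha> u = (1/4) * (\<Sum>\<^sub>\<infinity>(x,y). c x y * \<bar>u x - u y\<bar>\<^sup>2 * (norm (\<alpha> x - \<alpha> y))\<^sup>2)"

definition dirichlet_system ::
  "('v \<Rightarrow> 'v \<Rightarrow> real) \<Rightarrow> 'v set \<Rightarrow> nat \<Rightarrow> (nat \<Rightarrow> real) \<Rightarrow> (nat \<Rightarrow> 'v \<Rightarrow> real) \<Rightarrow> bool" where
  "dirichlet_system c \<Omega> n lam u \<longleftrightarrow>
     finite \<Omega> \<and> card \<Omega> = n \<and>
     (\<forall>i j. 1 \<le> i \<longrightarrow> i \<le> j \<longrightarrow> j \<le> n \<longrightarrow> lam i \<le> lam j) \<and>
     (\<forall>i\<in>{1..n}. \<forall>x. x \<notin> \<Omega> \<longrightarrow> u i x = 0) \<and>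
     (\<forall>i\<in>{1..n}. \<forall>x. (if x \<in> \<Omega> then lap c (u i) x else 0) = lam i * u i x) \<and>
     (\<forall>i\<in>{1..n}. \<forall>j\<in>{1..n}. nip c (u i) (u j) = (if i = j then 1 else 0))"

end

theory Submission
  imports Defs "Jordan_Normal_Form.Determinant"
begin


lemma summable_on_sum_fin:
  fixes f :: "'i \<Rightarrow> 'a \<Rightarrow> 'b::topological_comm_monoid_add"
  assumes "finite I" "\<And>i. i \<in> I \<Longrightarrow> f i summable_on A"
  shows "(\<lambda>x. \<Sum>i\<in>I. f i x) summable_on A"
  using assms
proof (induction I rule: finite_induct)
  case empty
  then show ?case by (simp add: summable_on_def)
next
  case (insert a F)
  then show ?case by (simp add: summable_on_add)
qed

lemma infsum_sum_fin:
  fixes f :: "'i \<Rightarrow> 'a \<Rightarrow> 'b::{topological_comm_monoid_add,t2_space}"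
  assumes "finite I" "\<And>i. i \<in> I \<Longrightarrow> f i summable_on A"
  shows "infsum (\<lambda>x. \<Sum>i\<in>I. f i x) A = (\<Sum>i\<in>I. infsum (f i) A)"
  using assms
proof (induction I rule: finite_induct)
  case empty
  then show ?case by simp
next
  case (insert a F)
  have "infsum (\<lambda>x. \<Sum>i\<in>insert a F. f i x) A = infsum (\<lambda>x. f a x + (\<Sum>i\<in>F. f i x)) A"
    using insert by simp
  also have "\<dots> = infsum (f a) A + infsum (\<lambda>x. \<Sum>i\<in>F. f i x) A"
    by (rule infsum_add) (auto intro!: summable_on_sum_fin insert.prems insert.hyps)
  finally show ?case using insert by simp
qed

lemma infsum_diff':
  fixes f g :: "'a \<Rightarrow> 'b::{topological_ab_group_add,t2_space}"
  assumes "f summable_on A" "g summable_on A"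
  shows "infsum (\<lambda>x. f x - g x) A = infsum f A - infsum g A"
proof -
  have "infsum (\<lambda>x. f x + - g x) A = infsum f A + infsum (\<lambda>x. - g x) A"
    by (rule infsum_add) (use assms summable_on_uminus in auto)
  then show ?thesis by (simp add: infsum_uminus)
qed

lemma summable_supp:
  fixes f :: "'a \<Rightarrow> 'b::topological_comm_monoid_add"
  assumes "finite S" "\<And>x. x \<notin> S \<Longrightarrow> f x = 0"
  shows "f summable_on A"
proof -
  have "f summable_on (A \<inter> S)" using assms by simp
  then show ?thesis by (rule summable_on_cong_neutral[THEN iffD1, rotated -1]) (use assms in auto)
qed

lemma infsum_supp:
  fixes f :: "'a \<Rightarrow> 'b::{topological_comm_monoid_add,t2_space}"
  assumes "finite S" "\<And>x. x \<notin> S \<Longrightarrow> f x = 0"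
  shows "infsum f UNIV = sum f S"
proof -
  have "infsum f UNIV = infsum f S"
    by (rule infsum_cong_neutral) (use assms in auto)
  then show ?thesis using assms by simp
qed

lemma weighted_cs:
  fixes w z :: "'i \<Rightarrow> real"
  assumes "\<And>i. i \<in> I \<Longrightarrow> 0 \<le> w i"
  shows "(\<Sum>i\<in>I. w i * z i)\<^sup>2 \<le> (\<Sum>i\<in>I. w i) * (\<Sum>i\<in>I. w i * (z i)\<^sup>2)"
proof -
  have "(\<Sum>i\<in>I. w i * z i) = (\<Sum>i\<in>I. sqrt (w i) * (sqrt (w i) * z i))"
    by (rule sum.cong) (use assms in \<open>auto simp: real_sqrt_mult[symmetric]\<close>)
  also have "(\<dots>)\<^sup>2 \<le> (\<Sum>i\<in>I. (sqrt (w i))\<^sup>2) * (\<Sum>i\<in>I. (sqrt (w i) * z i)\<^sup>2)"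
    by (rule Cauchy_Schwarz_ineq_sum)
  also have "\<dots> = (\<Sum>i\<in>I. w i) * (\<Sum>i\<in>I. w i * (z i)\<^sup>2)"
    using assms by (simp add: power_mult_distrib)
  finally show ?thesis .
qed

lemma final_ineq:
  fixes lam :: "nat \<Rightarrow> real" and w :: "nat \<Rightarrow> nat \<Rightarrow> real" and T R :: "nat \<Rightarrow> real"
  assumes kn: "k < n" and mono: "\<And>i j. 1 \<le> i \<Longrightarrow> i \<le> j \<Longrightarrow> j \<le> n \<Longrightarrow> lam i \<le> lam j"
    and wsym: "\<And>i j. w i j = w j i" and wnn: "\<And>i j. 0 \<le> w i j"
    and T: "\<And>i. i \<in> {1..k} \<Longrightarrow> T i = (\<Sum>j=1..n. (lam j - lam i) * w i j)"
    and R: "\<And>i. i \<in> {1..k} \<Longrightarrow> (\<Sum>j=1..n. (lam j - lam i)\<^sup>2 * w i j) \<le> R i"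
  shows "(\<Sum>i=1..k. (lam (Suc k) - lam i)\<^sup>2 * T i) \<le> (\<Sum>i=1..k. (lam (Suc k) - lam i) * R i)"
proof -
  define \<mu> where "\<mu> = lam (Suc k)"
  have d: "0 \<le> \<mu> - lam i" if "i \<in> {1..k}" for i using mono[of i "Suc k"] that kn by (auto simp: \<mu>_def)
  define F where "F i j = w i j * (lam j - lam i) * (\<mu> - lam i) * (lam j - \<mu>)" for i j
  have eq: "(\<Sum>i=1..k. (\<mu> - lam i) * (\<Sum>j=1..n. (lam j - lam i)\<^sup>2 * w i j)) - (\<Sum>i=1..k. (\<mu> - lam i)\<^sup>2 * T i)
      = (\<Sum>i=1..k. \<Sum>j=1..n. F i j)"
    unfolding sum_subtractf[symmetric]
  proof (rule sum.cong[OF refl])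
    fix i assume i: "i \<in> {1..k}"
    show "(\<mu> - lam i) * (\<Sum>j=1..n. (lam j - lam i)\<^sup>2 * w i j) - (\<mu> - lam i)\<^sup>2 * T i = (\<Sum>j=1..n. F i j)"
      unfolding T[OF i] sum_distrib_left sum_subtractf[symmetric]
      by (rule sum.cong[OF refl]) (simp add: F_def power2_eq_square algebra_simps)
  qed
  have split: "{1..n} = {1..k} \<union> {Suc k..n}" using kn by auto
  have Fs: "(\<Sum>i=1..k. \<Sum>j=1..n. F i j) = (\<Sum>i=1..k. \<Sum>j=1..k. F i j) + (\<Sum>i=1..k. \<Sum>j=Suc k..n. F i j)"
    unfolding split sum.distrib[symmetric]
    by (rule sum.cong[OF refl], rule sum.union_disjoint) auto
  have anti: "F i j = - F j i" for i j by (simp add: F_def wsym algebra_simps)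
  have "(\<Sum>i=1..k. \<Sum>j=1..k. F i j) = (\<Sum>j=1..k. \<Sum>i=1..k. F i j)" by (rule sum.swap)
  also have "\<dots> = (\<Sum>j=1..k. \<Sum>i=1..k. - F j i)"
    by (intro sum.cong refl) (rule anti)
  also have "\<dots> = - (\<Sum>i=1..k. \<Sum>j=1..k. F i j)"
    by (simp add: sum_negf)
  finally have X0: "(\<Sum>i=1..k. \<Sum>j=1..k. F i j) = 0" by simp
  have Y0: "0 \<le> (\<Sum>i=1..k. \<Sum>j=Suc k..n. F i j)"
  proof (intro sum_nonneg)
    fix i j assume i: "i \<in> {1..k}" and j: "j \<in> {Suc k..n}"
    have "lam i \<le> lam j" using mono[of i j] i j by auto
    moreover have "\<mu> \<le> lam j" using mono[of "Suc k" j] j by (auto simp: \<mu>_def)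
    ultimately show "0 \<le> F i j" unfolding F_def using d[OF i] wnn[of i j]
      by (intro mult_nonneg_nonneg) auto
  qed
  have "(\<Sum>i=1..k. (\<mu> - lam i)\<^sup>2 * T i) \<le> (\<Sum>i=1..k. (\<mu> - lam i) * (\<Sum>j=1..n. (lam j - lam i)\<^sup>2 * w i j))"
    using eq Fs X0 Y0 by linarith
  also have "\<dots> \<le> (\<Sum>i=1..k. (\<mu> - lam i) * R i)"
    by (rule sum_mono, rule mult_left_mono) (use R d in auto)
  finally show ?thesis by (simp add: \<mu>_def)
qed

lemma parseval:
  fixes f g :: "'v \<Rightarrow> 'h::real_inner" and p :: "'v \<Rightarrow> real" and u :: "nat \<Rightarrow> 'v \<Rightarrow> real"
  assumes fin: "finite \<Omega>"
    and compl: "\<And>x y. x \<in> \<Omega> \<Longrightarrow> y \<in> \<Omega> \<Longrightarrow> (\<Sum>j=1..n. u j x * u j y * p y) = (if x = y then 1 else 0)"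
  shows "(\<Sum>j=1..n. inner (\<Sum>x\<in>\<Omega>. (p x * u j x) *\<^sub>R f x) (\<Sum>y\<in>\<Omega>. (p y * u j y) *\<^sub>R g y))
       = (\<Sum>x\<in>\<Omega>. p x * inner (f x) (g x))"
proof -
  have "(\<Sum>j=1..n. inner (\<Sum>x\<in>\<Omega>. (p x * u j x) *\<^sub>R f x) (\<Sum>y\<in>\<Omega>. (p y * u j y) *\<^sub>R g y))
     = (\<Sum>j=1..n. \<Sum>x\<in>\<Omega>. \<Sum>y\<in>\<Omega>. p x * inner (f x) (g y) * (u j x * u j y * p y))"
  proof (rule sum.cong[OF refl])
    fix j
    have "inner (\<Sum>x\<in>\<Omega>. (p x * u j x) *\<^sub>R f x) (\<Sum>y\<in>\<Omega>. (p y * u j y) *\<^sub>R g y)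
      = (\<Sum>x\<in>\<Omega>. \<Sum>y\<in>\<Omega>. inner ((p x * u j x) *\<^sub>R f x) ((p y * u j y) *\<^sub>R g y))"
      unfolding inner_sum_left by (simp only: inner_sum_right)
    also have "\<dots> = (\<Sum>x\<in>\<Omega>. \<Sum>y\<in>\<Omega>. p x * inner (f x) (g y) * (u j x * u j y * p y))"
      by (intro sum.cong refl) (simp add: algebra_simps)
    finally show "inner (\<Sum>x\<in>\<Omega>. (p x * u j x) *\<^sub>R f x) (\<Sum>y\<in>\<Omega>. (p y * u j y) *\<^sub>R g y)
      = (\<Sum>x\<in>\<Omega>. \<Sum>y\<in>\<Omega>. p x * inner (f x) (g y) * (u j x * u j y * p y))" .
  qed
  also have "\<dots> = (\<Sum>x\<in>\<Omega>. \<Sum>j=1..n. \<Sum>y\<in>\<Omega>. p x * inner (f x) (g y) * (u j x * u j y * p y))"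
    by (rule sum.swap)
  also have "\<dots> = (\<Sum>x\<in>\<Omega>. \<Sum>y\<in>\<Omega>. \<Sum>j=1..n. p x * inner (f x) (g y) * (u j x * u j y * p y))"
    by (rule sum.cong[OF refl], rule sum.swap)
  also have "\<dots> = (\<Sum>x\<in>\<Omega>. \<Sum>y\<in>\<Omega>. p x * inner (f x) (g y) * (if x = y then 1 else 0))"
    by (intro sum.cong refl) (simp only: sum_distrib_left[symmetric] compl)
  also have "\<dots> = (\<Sum>x\<in>\<Omega>. p x * inner (f x) (g x))"
    using fin by (simp add: if_distrib cong: if_cong)
  finally show ?thesis .
qed

lemma abs_summable_summable_gen:
  fixes f :: \<open>'a \<Rightarrow> 'b :: {real_normed_vector, complete_space}\<close>
  assumes \<open>f abs_summable_on A\<close>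
  shows \<open>f summable_on A\<close>
proof -
  from assms obtain L where lim: \<open>(sum (\<lambda>x. norm (f x)) \<longlongrightarrow> L) (finite_subsets_at_top A)\<close>
    unfolding has_sum_def summable_on_def by blast
  then have *: \<open>cauchy_filter (filtermap (sum (\<lambda>x. norm (f x))) (finite_subsets_at_top A))\<close>
    by (auto intro!: nhds_imp_cauchy_filter simp: filterlim_def)
  have \<open>\<exists>P. eventually P (finite_subsets_at_top A) \<and>
              (\<forall>F F'. P F \<and> P F' \<longrightarrow> dist (sum f F) (sum f F') < e)\<close> if \<open>e>0\<close> for e
  proof -
    define d P where \<open>d = e/4\<close> and \<open>P F \<longleftrightarrow> finite F \<and> F \<subseteq> A \<and> dist (sum (\<lambda>x. norm (f x)) F) L < d\<close> for F
    then have \<open>d > 0\<close>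
      by (simp add: d_def that)
    have ev_P: \<open>eventually P (finite_subsets_at_top A)\<close>
      using lim
      by (auto simp add: P_def[abs_def] \<open>0 < d\<close> eventually_conj_iff eventually_finite_subsets_at_top_weakI tendsto_iff)
    
    moreover have \<open>dist (sum f F1) (sum f F2) < e\<close> if \<open>P F1\<close> and \<open>P F2\<close> for F1 F2
    proof -
      from ev_P
      obtain F' where \<open>finite F'\<close> and \<open>F' \<subseteq> A\<close> and P_sup_F': \<open>finite F \<and> F \<supseteq> F' \<and> F \<subseteq> A \<Longrightarrow> P F\<close> for F
        by atomize_elim (simp add: eventually_finite_subsets_at_top)
      define F where \<open>F = F' \<union> F1 \<union> F2\<close>
      have \<open>finite F\<close> and \<open>F \<subseteq> A\<close>
        using F_def P_def[abs_def] that \<open>finite F'\<close> \<open>F' \<subseteq> A\<close> by auto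
      have dist_F: \<open>dist (sum (\<lambda>x. norm (f x)) F) L < d\<close>
        by (metis F_def \<open>F \<subseteq> A\<close> P_def P_sup_F' \<open>finite F\<close> le_supE order_refl)

      have dist_F_subset: \<open>dist (sum f F) (sum f F') < 2*d\<close> if F': \<open>F' \<subseteq> F\<close> \<open>P F'\<close> for F'
      proof -
        have \<open>dist (sum f F) (sum f F') = norm (sum f (F-F'))\<close>
          unfolding dist_norm using \<open>finite F\<close> F' by (subst sum_diff) auto
        also have \<open>\<dots> \<le> norm (\<Sum>x\<in>F-F'. norm (f x))\<close>
          by (rule order.trans[OF sum_norm_le[OF order.refl]]) auto
        also have \<open>\<dots> = dist (\<Sum>x\<in>F. norm (f x)) (\<Sum>x\<in>F'. norm (f x))\<close>
          unfolding dist_norm using \<open>finite F\<close> F' by (subst sum_diff) auto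
        also have \<open>\<dots> < 2 * d\<close>
          using dist_F F' unfolding P_def dist_norm real_norm_def by linarith
        finally show \<open>dist (sum f F) (sum f F') < 2*d\<close> .
      qed

      have \<open>dist (sum f F1) (sum f F2) \<le> dist (sum f F) (sum f F1) + dist (sum f F) (sum f F2)\<close>
        by (rule dist_triangle3)
      also have \<open>\<dots> < 2 * d + 2 * d\<close>
        by (intro add_strict_mono dist_F_subset that) (auto simp: F_def)
      also have \<open>\<dots> \<le> e\<close>
        by (auto simp: d_def)
      finally show \<open>dist (sum f F1) (sum f F2) < e\<close> .
    qed
    then show ?thesis
      using ev_P by blast
  qed
  then have \<open>cauchy_filter (filtermap (sum f) (finite_subsets_at_top A))\<close>
    by (simp add: cauchy_filter_metric_filtermap)
  moreover have "complete (UNIV::'b set)"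
    by (meson Cauchy_convergent UNIV_I complete_def convergent_def)
  ultimately obtain L' where \<open>(sum f \<longlongrightarrow> L') (finite_subsets_at_top A)\<close>
    using complete_uniform[where S=UNIV] by (force simp add: filterlim_def)
  then show ?thesis
    using summable_on_def has_sum_def by blast
qed



lemma T1_lemma:
  fixes c :: "'v::countable \<Rightarrow> 'v \<Rightarrow> real" and \<alpha> :: "'v \<Rightarrow> 'h::{real_inner,complete_space}"
    and u :: "'v \<Rightarrow> real"
  assumes net: "network c" and fin: "finite \<Omega>"
    and Dsum: "\<forall>x\<in>\<Omega>. (\<lambda>y. c x y * (norm (\<alpha> x - \<alpha> y))\<^sup>2) summable_on UNIV"
    and van: "\<And>x. x \<notin> \<Omega> \<Longrightarrow> u x = 0"
    and ppos: "\<And>x. x \<in> \<Omega> \<Longrightarrow> 0 < npi c x"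
  shows "Gamma_u2 c \<alpha> u - Lambda c \<alpha> u
     = (1/2) * (\<Sum>x\<in>\<Omega>. \<Sum>y\<in>\<Omega>. u x * u y * (c x y * (norm (\<alpha> x - \<alpha> y))\<^sup>2))"
proof -
  have c0: "\<And>x y. 0 \<le> c x y" and csym: "\<And>x y. c x y = c y x"
    using net unfolding network_def by auto
  define p where "p = npi c"
  define D where "D x y = c x y * (norm (\<alpha> x - \<alpha> y))\<^sup>2" for x y
  have D0: "0 \<le> D x y" for x y using c0 by (simp add: D_def)
  have Dsym: "D x y = D y x" for x y by (simp add: D_def csym norm_minus_commute)
  have Ds: "D x summable_on A" if x: "x \<in> \<Omega>" for x A
  proof -
    have "(\<lambda>y. D x y) summable_on UNIV" using Dsum x by (simp add: D_def)
    then show ?thesis by (rule summable_on_subset_banach) auto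
  qed
  define E where "E x = (\<Sum>\<^sub>\<infinity>y\<in>-\<Omega>. D x y)" for x
  have splitU: "UNIV = \<Omega> \<union> (-\<Omega>)" by auto
  have Dsplit: "(\<Sum>\<^sub>\<infinity>y. D x y) = (\<Sum>y\<in>\<Omega>. D x y) + E x" if x: "x \<in> \<Omega>" for x
  proof -
    have "(\<Sum>\<^sub>\<infinity>y. D x y) = (\<Sum>\<^sub>\<infinity>y\<in>\<Omega> \<union> (-\<Omega>). D x y)" using splitU by simp
    also have "\<dots> = (\<Sum>\<^sub>\<infinity>y\<in>\<Omega>. D x y) + E x"
      unfolding E_def by (rule infsum_Un_disjoint) (use Ds x in auto)
    finally show ?thesis using fin by simp
  qed
  have G: "Gamma_u2 c \<alpha> u = (\<Sum>x\<in>\<Omega>. (1/2) * ((\<Sum>y\<in>\<Omega>. D x y) + E x) * (u x)\<^sup>2)"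
  proof -
    have "Gamma_u2 c \<alpha> u = (\<Sum>x\<in>\<Omega>. p x * Gamma1 c \<alpha> x * (u x)\<^sup>2)"
      unfolding Gamma_u2_def p_def by (rule infsum_supp) (use fin van in auto)
    also have "\<dots> = (\<Sum>x\<in>\<Omega>. (1/2) * ((\<Sum>y\<in>\<Omega>. D x y) + E x) * (u x)\<^sup>2)"
    proof (rule sum.cong[OF refl])
      fix x assume x: "x \<in> \<Omega>"
      have "Gamma1 c \<alpha> x = (1/2) * (\<Sum>\<^sub>\<infinity>y. D x y * (1 / p x))"
        unfolding Gamma1_def trans_prob_def p_def D_def by simp
      also have "(\<Sum>\<^sub>\<infinity>y. D x y * (1 / p x)) = (\<Sum>\<^sub>\<infinity>y. D x y) * (1 / p x)"
        by (rule infsum_cmult_left')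
      finally have "p x * Gamma1 c \<alpha> x = p x * ((1/2) * ((\<Sum>\<^sub>\<infinity>y. D x y) * (1 / p x)))"
        by simp
      then have "p x * Gamma1 c \<alpha> x = (1/2) * (\<Sum>\<^sub>\<infinity>y. D x y)"
        using ppos[OF x] by (simp add: p_def)
      then show "p x * Gamma1 c \<alpha> x * (u x)\<^sup>2 = (1/2) * ((\<Sum>y\<in>\<Omega>. D x y) + E x) * (u x)\<^sup>2"
        using Dsplit[OF x] by simp
    qed
    finally show ?thesis .
  qed
  define K where "K = (\<Sum>z\<in>\<Omega>. (u z)\<^sup>2)"
  have uK: "(u z)\<^sup>2 \<le> K" for z
  proof (cases "z \<in> \<Omega>")
    case True then show ?thesis unfolding K_def
      using member_le_sum[of z \<Omega> "\<lambda>z. (u z)\<^sup>2"] fin by auto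
  next
    case False then show ?thesis unfolding K_def using van by (simp add: sum_nonneg)
  qed
  define fL where "fL x y = c x y * \<bar>u x - u y\<bar>\<^sup>2 * (norm (\<alpha> x - \<alpha> y))\<^sup>2" for x y
  have fLD: "fL x y = (u x - u y)\<^sup>2 * D x y" for x y by (simp add: fL_def D_def)
  define G1 where "G1 = (\<lambda>(x,y). if x \<in> \<Omega> then D x y else 0)"
  have G1s: "G1 summable_on UNIV"
  proof -
    have "G1 summable_on (\<Union>x\<in>\<Omega>. Pair x ` UNIV)"
    proof (rule summable_on_finite_union_disjoint[OF fin])
      fix x assume x: "x \<in> \<Omega>"
      have "(G1 \<circ> Pair x) summable_on UNIV"
        using Ds[OF x, of UNIV] x by (simp add: G1_def o_def)
      then show "G1 summable_on range (Pair x)"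
        by (subst summable_on_reindex) (auto simp: inj_on_def)
    qed auto
    then show ?thesis
      by (rule summable_on_cong_neutral[THEN iffD1, rotated -1]) (auto simp: G1_def image_iff)
  qed
  have G2s: "(G1 \<circ> prod.swap) summable_on UNIV"
  proof -
    have "G1 summable_on (prod.swap ` UNIV)" using G1s by simp
    then show ?thesis by (subst (asm) summable_on_reindex) auto
  qed
  have fLs: "(\<lambda>(x,y). fL x y) summable_on UNIV"
  proof (rule summable_on_comparison_test)
    show "(\<lambda>z. 2 * K * G1 z + 2 * K * (G1 \<circ> prod.swap) z) summable_on UNIV"
      by (intro summable_on_add summable_on_cmult_right G1s G2s)
  next
    fix z :: "'v \<times> 'v"
    obtain x y where z: "z = (x,y)" by (cases z)
    show "0 \<le> (\<lambda>(x,y). fL x y) z" using z D0 by (simp add: fLD)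
    have sq: "(u x - u y)\<^sup>2 \<le> 2 * (u x)\<^sup>2 + 2 * (u y)\<^sup>2"
      using zero_le_power2[of "u x + u y"] unfolding power2_diff power2_sum by linarith
    have bnd: "(u x - u y)\<^sup>2 * D x y \<le> 2 * K * (if x \<in> \<Omega> then D x y else 0) + 2 * K * (if y \<in> \<Omega> then D x y else 0)"
    proof (cases "x \<in> \<Omega>"; cases "y \<in> \<Omega>")
      assume "x \<in> \<Omega>" "y \<in> \<Omega>"
      have "(u x - u y)\<^sup>2 \<le> 4 * K" using sq uK[of x] uK[of y] by linarith
      then show ?thesis using \<open>x \<in> \<Omega>\<close> \<open>y \<in> \<Omega>\<close> D0[of x y] mult_right_mono[of "(u x - u y)\<^sup>2" "4*K" "D x y"]
        by simp
    next
      assume "x \<in> \<Omega>" "y \<notin> \<Omega>"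
      then show ?thesis using van[of y] uK[of x] D0[of x y] mult_right_mono[of "(u x)\<^sup>2" "K" "D x y"]
        by simp (smt (verit) mult_right_mono zero_le_power2)
    next
      assume "x \<notin> \<Omega>" "y \<in> \<Omega>"
      then show ?thesis using van[of x] uK[of y] D0[of x y] mult_right_mono[of "(u y)\<^sup>2" "K" "D x y"]
        by simp (smt (verit) mult_right_mono zero_le_power2)
    next
      assume "x \<notin> \<Omega>" "y \<notin> \<Omega>"
      then show ?thesis using van[of x] van[of y] by simp
    qed
    then show "(\<lambda>(x,y). fL x y) z \<le> 2 * K * G1 z + 2 * K * (G1 \<circ> prod.swap) z"
      using bnd unfolding z by (simp add: fLD G1_def split del: if_split) (metis Dsym)
  qed
  have fLs': "(\<lambda>(x,y). fL x y) summable_on Sigma UNIV (\<lambda>_. UNIV)" using fLs by simp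
  define g where "g x = (\<Sum>\<^sub>\<infinity>y. fL x y)" for x
  have Lam1: "Lambda c \<alpha> u = (1/4) * (\<Sum>\<^sub>\<infinity>x. g x)"
    unfolding Lambda_def g_def fL_def[symmetric]
    using infsum_Sigma'_banach[OF fLs'] by simp
  have gs: "g summable_on A" for A
    using summable_on_Sigma_banach[OF fLs'] summable_on_subset_banach[of g UNIV A]
    unfolding g_def by auto
  have rows: "fL x summable_on A" for x A
    using summable_on_SigmaD1[OF fLs', of x] summable_on_subset_banach[of "fL x" UNIV A] by auto
  have gin: "g x = (\<Sum>y\<in>\<Omega>. fL x y) + (u x)\<^sup>2 * E x" if x: "x \<in> \<Omega>" for x
  proof -
    have "g x = (\<Sum>\<^sub>\<infinity>y\<in>\<Omega> \<union> (-\<Omega>). fL x y)" unfolding g_def using splitU by simp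
    also have "\<dots> = (\<Sum>\<^sub>\<infinity>y\<in>\<Omega>. fL x y) + (\<Sum>\<^sub>\<infinity>y\<in>-\<Omega>. fL x y)"
      by (rule infsum_Un_disjoint) (use rows in auto)
    also have "(\<Sum>\<^sub>\<infinity>y\<in>-\<Omega>. fL x y) = (\<Sum>\<^sub>\<infinity>y\<in>-\<Omega>. (u x)\<^sup>2 * D x y)"
      by (rule infsum_cong) (simp add: fLD van)
    also have "\<dots> = (u x)\<^sup>2 * E x" unfolding E_def by (rule infsum_cmult_right')
    finally show ?thesis using fin by simp
  qed
  have gout: "g x = (\<Sum>y\<in>\<Omega>. (u y)\<^sup>2 * D y x)" if x: "x \<notin> \<Omega>" for x
  proof -
    have "g x = (\<Sum>y\<in>\<Omega>. fL x y)" unfolding g_def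
      by (rule infsum_supp) (use fin van x in \<open>auto simp: fLD\<close>)
    also have "\<dots> = (\<Sum>y\<in>\<Omega>. (u y)\<^sup>2 * D y x)"
      by (rule sum.cong) (use van x in \<open>auto simp: fLD Dsym[of x]\<close>)
    finally show ?thesis .
  qed
  have "(\<Sum>\<^sub>\<infinity>x. g x) = (\<Sum>\<^sub>\<infinity>x\<in>\<Omega> \<union> (-\<Omega>). g x)" using splitU by simp
  also have "\<dots> = (\<Sum>\<^sub>\<infinity>x\<in>\<Omega>. g x) + (\<Sum>\<^sub>\<infinity>x\<in>-\<Omega>. g x)"
    by (rule infsum_Un_disjoint) (use gs in auto)
  also have "(\<Sum>\<^sub>\<infinity>x\<in>-\<Omega>. g x) = (\<Sum>\<^sub>\<infinity>x\<in>-\<Omega>. \<Sum>y\<in>\<Omega>. (u y)\<^sup>2 * D y x)"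
    by (rule infsum_cong) (simp add: gout)
  also have "\<dots> = (\<Sum>y\<in>\<Omega>. \<Sum>\<^sub>\<infinity>x\<in>-\<Omega>. (u y)\<^sup>2 * D y x)"
    by (rule infsum_sum_fin[OF fin]) (auto intro!: summable_on_cmult_right Ds)
  also have "\<dots> = (\<Sum>y\<in>\<Omega>. (u y)\<^sup>2 * E y)"
    unfolding E_def by (simp add: infsum_cmult_right')
  also have "(\<Sum>\<^sub>\<infinity>x\<in>\<Omega>. g x) = (\<Sum>x\<in>\<Omega>. (\<Sum>y\<in>\<Omega>. fL x y) + (u x)\<^sup>2 * E x)"
    using fin gin by simp
  finally have Lam2: "Lambda c \<alpha> u = (1/4) * ((\<Sum>x\<in>\<Omega>. \<Sum>y\<in>\<Omega>. (u x - u y)\<^sup>2 * D x y)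
        + 2 * (\<Sum>x\<in>\<Omega>. (u x)\<^sup>2 * E x))"
    unfolding Lam1 by (simp add: sum.distrib fLD)
  have G': "Gamma_u2 c \<alpha> u = (1/2) * (\<Sum>x\<in>\<Omega>. \<Sum>y\<in>\<Omega>. (u x)\<^sup>2 * D x y) + (1/2) * (\<Sum>x\<in>\<Omega>. (u x)\<^sup>2 * E x)"
    unfolding G by (simp add: sum_distrib_left sum_distrib_right sum.distrib sum_divide_distrib algebra_simps)
  have swp: "(\<Sum>x\<in>\<Omega>. \<Sum>y\<in>\<Omega>. (u y)\<^sup>2 * D x y) = (\<Sum>x\<in>\<Omega>. \<Sum>y\<in>\<Omega>. (u x)\<^sup>2 * D x y)"
    by (subst sum.swap) (simp add: Dsym)
  have exp: "(\<Sum>x\<in>\<Omega>. \<Sum>y\<in>\<Omega>. (u x - u y)\<^sup>2 * D x y)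
     = (\<Sum>x\<in>\<Omega>. \<Sum>y\<in>\<Omega>. (u x)\<^sup>2 * D x y) + (\<Sum>x\<in>\<Omega>. \<Sum>y\<in>\<Omega>. (u y)\<^sup>2 * D x y)
       - 2 * (\<Sum>x\<in>\<Omega>. \<Sum>y\<in>\<Omega>. u x * u y * D x y)"
    by (simp add: sum.distrib[symmetric] sum_subtractf[symmetric] sum_distrib_left power2_diff algebra_simps)
  show ?thesis
    unfolding G' Lam2 D_def[symmetric] using exp swp by (simp add: field_simps)
qed




lemma le_one_plus_sq: "(t::real) \<le> 1 + t\<^sup>2"
proof (cases "t \<le> 1")
  case True then show ?thesis using zero_le_power2[of t] by linarith
next
  case False
  then have "t * 1 \<le> t * t" by (intro mult_left_mono) auto
  then show ?thesis by (simp add: power2_eq_square)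
qed

lemma completeness:
  fixes p :: "'v \<Rightarrow> real" and u :: "nat \<Rightarrow> 'v \<Rightarrow> real"
  assumes fin: "finite \<Omega>" and card: "card \<Omega> = n"
    and orth: "\<And>i j. i \<in> {1..n} \<Longrightarrow> j \<in> {1..n} \<Longrightarrow>
       (\<Sum>x\<in>\<Omega>. p x * u i x * u j x) = (if i = j then 1 else 0)"
    and x: "x \<in> \<Omega>" and y: "y \<in> \<Omega>"
  shows "(\<Sum>j=1..n. u j x * u j y * p y) = (if x = y then 1 else 0)"
proof -
  obtain e where e: "bij_betw e {0..<n} \<Omega>"
    using ex_bij_betw_nat_finite[OF fin] card by auto
  define U where "U = mat n n (\<lambda>(a,j). u (j+1) (e a))"
  define W where "W = mat n n (\<lambda>(j,a). p (e a) * u (j+1) (e a))"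
  have U: "U \<in> carrier_mat n n" and W: "W \<in> carrier_mat n n" by (auto simp: U_def W_def)
  have "W * U = 1\<^sub>m n"
  proof (rule eq_matI)
    fix i j assume ij: "i < dim_row (1\<^sub>m n)" "j < dim_col (1\<^sub>m n)"
    have "(W * U) $$ (i,j) = (\<Sum>a=0..<n. p (e a) * u (i+1) (e a) * u (j+1) (e a))"
      using ij by (simp add: U_def W_def scalar_prod_def mult.assoc)
    also have "\<dots> = (\<Sum>z\<in>\<Omega>. p z * u (i+1) z * u (j+1) z)"
      using sum.reindex_bij_betw[OF e, of "\<lambda>z. p z * u (i+1) z * u (j+1) z"] by simp
    also have "\<dots> = 1\<^sub>m n $$ (i,j)" using ij orth[of "i+1" "j+1"] by auto
    finally show "(W * U) $$ (i,j) = 1\<^sub>m n $$ (i,j)" .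
  qed (auto simp: U_def W_def)
  hence UW: "U * W = 1\<^sub>m n" using mat_mult_left_right_inverse[OF W U] by simp
  obtain a where a: "a < n" "e a = x" using e x by (auto simp: bij_betw_def)
  obtain b where b: "b < n" "e b = y" using e y by (auto simp: bij_betw_def)
  have "(U * W) $$ (a,b) = (\<Sum>j=0..<n. u (j+1) x * (p y * u (j+1) y))"
    using a b by (simp add: U_def W_def scalar_prod_def)
  also have "\<dots> = (\<Sum>j=1..n. u j x * u j y * p y)"
    by (rule sum.reindex_bij_witness[of _ "\<lambda>j. j - 1" "\<lambda>j. j + 1"]) auto
  finally have "(\<Sum>j=1..n. u j x * u j y * p y) = (U * W) $$ (a,b)" by simp
  also have "\<dots> = (if a = b then 1 else 0)" using UW a b by simp
  also have "(a = b) = (x = y)" using a b e by (auto simp: bij_betw_def inj_on_def)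
  finally show ?thesis .
qed


theorem theorem3p2:
  fixes c :: "'v::countable \<Rightarrow> 'v \<Rightarrow> real"
    and \<Omega> :: "'v set" and n :: nat
    and lam :: "nat \<Rightarrow> real" and u :: "nat \<Rightarrow> 'v \<Rightarrow> real"
    and \<alpha> :: "'v \<Rightarrow> 'h::{real_inner, complete_space}"
    and k :: nat
  assumes "network c"
    and "finite \<Omega>" and "card \<Omega> = n"
    and "dirichlet_system c \<Omega> n lam u"
    and "\<forall>x\<in>\<Omega>. (\<lambda>y. c x y * (norm (\<alpha> x - \<alpha> y))\<^sup>2) summable_on UNIV"
    and "k < n"
  shows "(\<Sum>i=1..k. (lam (Suc k) - lam i)\<^sup>2 * (Gamma_u2 c \<alpha> (u i) - Lambda c \<alpha> (u i)))
         \<le> (\<Sum>i=1..k. (lam (Suc k) - lam i) *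
              nnormsq c (\<lambda>x. u i x *\<^sub>R lap c \<alpha> x - 2 *\<^sub>R Gamma2 c \<alpha> (u i) x))"
proof -
  note net = assms(1) and fin = assms(2) and card = assms(3) and Dsum = assms(5) and kn = assms(6)
  have c0: "\<And>x y. 0 \<le> c x y" and csym: "\<And>x y. c x y = c y x"
    and csum: "\<And>x. (\<lambda>y. c x y) summable_on UNIV"
    using net unfolding network_def by auto
  define p where "p = npi c"
  have p_eq: "p x = (\<Sum>\<^sub>\<infinity>y. c x y)" for x by (simp add: p_def npi_def)
  have p0: "0 \<le> p x" for x unfolding p_eq by (rule infsum_nonneg) (use c0 in auto)
  have cp_fin: "(\<Sum>y\<in>F. c x y) \<le> p x" if "finite F" for F x
    unfolding p_eq by (rule finite_sum_le_infsum) (use csum c0 that in auto)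
  have tp: "trans_prob c x y = c x y / p x" for x y by (simp add: trans_prob_def p_def)
  have mono: "\<And>i j. 1 \<le> i \<Longrightarrow> i \<le> j \<Longrightarrow> j \<le> n \<Longrightarrow> lam i \<le> lam j"
    and van: "\<And>i x. i \<in> {1..n} \<Longrightarrow> x \<notin> \<Omega> \<Longrightarrow> u i x = 0"
    and eig0: "\<And>i x. i \<in> {1..n} \<Longrightarrow> (if x \<in> \<Omega> then lap c (u i) x else 0) = lam i * u i x"
    and orth0: "\<And>i j. i \<in> {1..n} \<Longrightarrow> j \<in> {1..n} \<Longrightarrow> nip c (u i) (u j) = (if i = j then 1 else 0)"
    using assms(4) unfolding dirichlet_system_def by auto
  have eig: "lap c (u i) x = lam i * u i x" if "i \<in> {1..n}" "x \<in> \<Omega>" for i x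
    using eig0[OF that(1), of x] that by simp
  have orth: "(\<Sum>x\<in>\<Omega>. p x * u i x * u j x) = (if i = j then 1 else 0)"
    if "i \<in> {1..n}" "j \<in> {1..n}" for i j
  proof -
    have "nip c (u i) (u j) = (\<Sum>x\<in>\<Omega>. p x * u i x * u j x)"
      unfolding nip_def p_def by (rule infsum_supp) (use fin van that in auto)
    then show ?thesis using orth0[OF that] by simp
  qed
  have compl: "(\<Sum>j=1..n. u j x * u j y * p y) = (if x = y then 1 else 0)"
    if "x \<in> \<Omega>" "y \<in> \<Omega>" for x y
    by (rule completeness[OF fin card orth that])
  have ppos: "0 < p x" if x: "x \<in> \<Omega>" for x
  proof -
    have "(\<Sum>j=1..n. u j x * u j x) * p x = 1"
      using compl[OF x x] by (simp add: sum_distrib_right)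
    then have "p x \<noteq> 0" by auto
    then show ?thesis using p0[of x] by simp
  qed

  have ppos': "\<And>x. x \<in> \<Omega> \<Longrightarrow> 0 < npi c x" using ppos by (simp add: p_def)
  define a where "a i j = (\<Sum>x\<in>\<Omega>. (p x * u i x * u j x) *\<^sub>R \<alpha> x)" for i j
  define B where "B i x = (\<Sum>y\<in>\<Omega>. (c x y / p x * u i y) *\<^sub>R (\<alpha> x - \<alpha> y))" for i x
  have asym: "a i j = a j i" for i j unfolding a_def by (simp add: mult_ac)
  have star: "(\<Sum>y\<in>\<Omega>. c x y * u i y) = p x * (1 - lam i) * u i x"
    if i: "i \<in> {1..n}" and x: "x \<in> \<Omega>" for i x
  proof -
    have "lap c (u i) x = (\<Sum>\<^sub>\<infinity>y. c x y * (u i x / p x) - c x y / p x * u i y)"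
      unfolding lap_def tp by (rule infsum_cong) (use ppos[OF x] in \<open>simp add: field_simps\<close>)
    also have "\<dots> = (\<Sum>\<^sub>\<infinity>y. c x y * (u i x / p x)) - (\<Sum>\<^sub>\<infinity>y. c x y / p x * u i y)"
      by (rule infsum_diff'[OF summable_on_cmult_left[OF csum] summable_supp[OF fin]]) (simp add: van[OF i])
    also have "(\<Sum>\<^sub>\<infinity>y. c x y * (u i x / p x)) = p x * (u i x / p x)"
      using infsum_cmult_left'[of "\<lambda>y. c x y" "u i x / p x" UNIV] p_eq[of x] by simp
    also have "(\<Sum>\<^sub>\<infinity>y. c x y / p x * u i y) = (\<Sum>y\<in>\<Omega>. c x y / p x * u i y)"
      by (rule infsum_supp[OF fin]) (simp add: van[OF i])
    finally have "lam i * u i x = p x * (u i x / p x) - (\<Sum>y\<in>\<Omega>. c x y / p x * u i y)"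
      using eig[OF i x] by simp
    also have "\<dots> = u i x - (\<Sum>y\<in>\<Omega>. c x y * u i y) / p x"
      using ppos[OF x] by (simp add: sum_divide_distrib)
    finally show ?thesis using ppos[OF x] by (simp add: field_simps)
  qed
  have L5: "(\<Sum>x\<in>\<Omega>. (p x * u j x) *\<^sub>R B i x) = (lam j - lam i) *\<^sub>R a i j"
    if i: "i \<in> {1..n}" and j: "j \<in> {1..n}" for i j
  proof -
    have trm: "(p x * u j x) *\<^sub>R ((c x y / p x * u i y) *\<^sub>R (\<alpha> x - \<alpha> y))
        = (c x y * u j x * u i y) *\<^sub>R \<alpha> x - (c x y * u j x * u i y) *\<^sub>R \<alpha> y" if x: "x \<in> \<Omega>" for x y
    proof -
      have coef: "p x * u j x * (c x y / p x * u i y) = c x y * u j x * u i y"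
        using ppos[OF x] by (simp add: field_simps)
      show ?thesis unfolding scaleR_scaleR coef scaleR_diff_right by (rule refl)
    qed
    have "(\<Sum>x\<in>\<Omega>. (p x * u j x) *\<^sub>R B i x)
        = (\<Sum>x\<in>\<Omega>. \<Sum>y\<in>\<Omega>. (c x y * u j x * u i y) *\<^sub>R \<alpha> x - (c x y * u j x * u i y) *\<^sub>R \<alpha> y)"
      unfolding B_def scaleR_sum_right by (intro sum.cong refl) (blast intro: trm)
    also have "\<dots> = (\<Sum>x\<in>\<Omega>. \<Sum>y\<in>\<Omega>. (c x y * u j x * u i y) *\<^sub>R \<alpha> x)
        - (\<Sum>x\<in>\<Omega>. \<Sum>y\<in>\<Omega>. (c x y * u j x * u i y) *\<^sub>R \<alpha> y)"
      by (simp add: sum_subtractf)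
    also have "(\<Sum>x\<in>\<Omega>. \<Sum>y\<in>\<Omega>. (c x y * u j x * u i y) *\<^sub>R \<alpha> x) = (1 - lam i) *\<^sub>R a i j"
    proof -
      have "(\<Sum>x\<in>\<Omega>. \<Sum>y\<in>\<Omega>. (c x y * u j x * u i y) *\<^sub>R \<alpha> x)
          = (\<Sum>x\<in>\<Omega>. (u j x * (\<Sum>y\<in>\<Omega>. c x y * u i y)) *\<^sub>R \<alpha> x)"
        by (intro sum.cong refl) (simp add: scaleR_sum_left[symmetric] sum_distrib_left mult_ac)
      also have "\<dots> = (\<Sum>x\<in>\<Omega>. ((1 - lam i) * (p x * u i x * u j x)) *\<^sub>R \<alpha> x)"
        by (intro sum.cong refl) (simp add: star[OF i] mult_ac)
      also have "\<dots> = (1 - lam i) *\<^sub>R a i j" unfolding a_def scaleR_sum_right by (simp add: scaleR_scaleR)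
      finally show ?thesis .
    qed
    also have "(\<Sum>x\<in>\<Omega>. \<Sum>y\<in>\<Omega>. (c x y * u j x * u i y) *\<^sub>R \<alpha> y) = (1 - lam j) *\<^sub>R a i j"
    proof -
      have "(\<Sum>x\<in>\<Omega>. \<Sum>y\<in>\<Omega>. (c x y * u j x * u i y) *\<^sub>R \<alpha> y)
          = (\<Sum>y\<in>\<Omega>. \<Sum>x\<in>\<Omega>. (c x y * u j x * u i y) *\<^sub>R \<alpha> y)"
        by (rule sum.swap)
      also have "\<dots> = (\<Sum>y\<in>\<Omega>. (u i y * (\<Sum>x\<in>\<Omega>. c y x * u j x)) *\<^sub>R \<alpha> y)"
        by (intro sum.cong refl) (simp add: scaleR_sum_left[symmetric] sum_distrib_left csym mult_ac)
      also have "\<dots> = (\<Sum>y\<in>\<Omega>. ((1 - lam j) * (p y * u i y * u j y)) *\<^sub>R \<alpha> y)"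
        by (intro sum.cong refl) (simp add: star[OF j] mult_ac)
      also have "\<dots> = (1 - lam j) *\<^sub>R a i j" unfolding a_def scaleR_sum_right by (simp add: scaleR_scaleR)
      finally show ?thesis .
    qed
    finally show ?thesis by (simp add: algebra_simps)
  qed
  have RB: "u i x *\<^sub>R lap c \<alpha> x - 2 *\<^sub>R Gamma2 c \<alpha> (u i) x = B i x" if i: "i \<in> {1..n}" for i x
  proof -
    define f1 where "f1 y = (u i x * (c x y / p x)) *\<^sub>R (\<alpha> x - \<alpha> y)" for y
    define f2 where "f2 y = (c x y / p x * u i y) *\<^sub>R (\<alpha> x - \<alpha> y)" for y
    have f2s: "f2 summable_on UNIV" by (rule summable_supp[OF fin]) (simp add: f2_def van[OF i])
    have f1s: "f1 summable_on UNIV"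
    proof (cases "x \<in> \<Omega>")
      case False then show ?thesis by (intro summable_supp[of "{}"]) (simp_all add: f1_def van[OF i])
    next
      case True
      have "(\<lambda>y. norm (f1 y)) summable_on UNIV"
      proof (rule summable_on_comparison_test)
        show "(\<lambda>y. \<bar>u i x\<bar> / p x * (c x y + c x y * (norm (\<alpha> x - \<alpha> y))\<^sup>2)) summable_on UNIV"
          using csum Dsum True by (intro summable_on_cmult_right summable_on_add) auto
      next
        fix y
        show "0 \<le> norm (f1 y)" by simp
        have "norm (f1 y) = \<bar>u i x * (c x y / p x)\<bar> * norm (\<alpha> x - \<alpha> y)"
          unfolding f1_def by (rule norm_scaleR)
        also have "\<dots> = (\<bar>u i x\<bar> / p x) * (c x y * norm (\<alpha> x - \<alpha> y))"
          using ppos[OF True] c0[of x y] by (simp add: abs_mult field_simps)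
        also have "\<dots> \<le> (\<bar>u i x\<bar> / p x) * (c x y + c x y * (norm (\<alpha> x - \<alpha> y))\<^sup>2)"
        proof (rule mult_left_mono)
          show "c x y * norm (\<alpha> x - \<alpha> y) \<le> c x y + c x y * (norm (\<alpha> x - \<alpha> y))\<^sup>2"
            using mult_left_mono[OF le_one_plus_sq c0[of x y]] by (simp add: distrib_left)
        qed (use p0[of x] in simp)
        finally show "norm (f1 y) \<le> (\<bar>u i x\<bar> / p x) * (c x y + c x y * (norm (\<alpha> x - \<alpha> y))\<^sup>2)" .
      qed
      then show ?thesis by (rule abs_summable_summable_gen)
    qed
    have lapx: "u i x *\<^sub>R lap c \<alpha> x = (\<Sum>\<^sub>\<infinity>y. f1 y)"
      unfolding lap_def tp f1_def by (simp add: infsum_scaleR_right[symmetric] scaleR_scaleR)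
    have "2 *\<^sub>R Gamma2 c \<alpha> (u i) x = (\<Sum>\<^sub>\<infinity>y. (c x y / p x) *\<^sub>R ((u i x - u i y) *\<^sub>R (\<alpha> x - \<alpha> y)))"
      unfolding Gamma2_def tp by simp
    also have "\<dots> = (\<Sum>\<^sub>\<infinity>y. f1 y - f2 y)"
      by (rule infsum_cong) (simp add: f1_def f2_def scaleR_scaleR algebra_simps)
    also have "\<dots> = (\<Sum>\<^sub>\<infinity>y. f1 y) - (\<Sum>\<^sub>\<infinity>y. f2 y)" by (rule infsum_diff'[OF f1s f2s])
    finally have gam: "2 *\<^sub>R Gamma2 c \<alpha> (u i) x = (\<Sum>\<^sub>\<infinity>y. f1 y) - (\<Sum>\<^sub>\<infinity>y. f2 y)" .
    have "(\<Sum>\<^sub>\<infinity>y. f2 y) = (\<Sum>y\<in>\<Omega>. f2 y)" by (rule infsum_supp[OF fin]) (simp add: f2_def van[OF i])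
    also have "\<dots> = B i x" by (simp add: B_def f2_def)
    finally show ?thesis using lapx gam by simp
  qed
  have Bb: "p x * (norm (B i x))\<^sup>2 \<le> (\<Sum>y\<in>\<Omega>. (u i y)\<^sup>2 * (c y x * (norm (\<alpha> y - \<alpha> x))\<^sup>2))" for i x
  proof (cases "p x = 0")
    case True then show ?thesis by (simp add: sum_nonneg c0)
  next
    case False then have px: "0 < p x" using p0[of x] by simp
    define z where "z y = \<bar>u i y\<bar> * norm (\<alpha> x - \<alpha> y)" for y
    have "norm (B i x) \<le> (\<Sum>y\<in>\<Omega>. norm ((c x y / p x * u i y) *\<^sub>R (\<alpha> x - \<alpha> y)))"
      unfolding B_def by (rule norm_sum)
    also have "\<dots> = (\<Sum>y\<in>\<Omega>. c x y * z y) / p x"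
      unfolding sum_divide_distrib norm_scaleR by (intro sum.cong refl) (use px c0 in \<open>simp add: z_def abs_mult field_simps\<close>)
    finally have nB: "norm (B i x) \<le> (\<Sum>y\<in>\<Omega>. c x y * z y) / p x" .
    have "p x * (norm (B i x))\<^sup>2 \<le> p x * ((\<Sum>y\<in>\<Omega>. c x y * z y) / p x)\<^sup>2"
      by (rule mult_left_mono[OF power_mono[OF nB]]) (use px in auto)
    also have "\<dots> = (\<Sum>y\<in>\<Omega>. c x y * z y)\<^sup>2 / p x"
      using px by (simp add: power2_eq_square field_simps)
    also have "\<dots> \<le> (\<Sum>y\<in>\<Omega>. c x y) * (\<Sum>y\<in>\<Omega>. c x y * (z y)\<^sup>2) / p x"
      by (rule divide_right_mono[OF weighted_cs]) (use c0 px in auto)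
    also have "\<dots> \<le> p x * (\<Sum>y\<in>\<Omega>. c x y * (z y)\<^sup>2) / p x"
      by (intro divide_right_mono mult_right_mono cp_fin fin sum_nonneg) (use c0 px in auto)
    also have "\<dots> = (\<Sum>y\<in>\<Omega>. c x y * (z y)\<^sup>2)" using px by simp
    also have "\<dots> = (\<Sum>y\<in>\<Omega>. (u i y)\<^sup>2 * (c y x * (norm (\<alpha> y - \<alpha> x))\<^sup>2))"
      by (intro sum.cong refl) (simp add: z_def power_mult_distrib csym[of x] norm_minus_commute mult_ac)
    finally show ?thesis .
  qed
  have Rs: "(\<lambda>x. p x * (norm (B i x))\<^sup>2) summable_on UNIV" for i
  proof (rule summable_on_comparison_test)
    show "(\<lambda>x. \<Sum>y\<in>\<Omega>. (u i y)\<^sup>2 * (c y x * (norm (\<alpha> y - \<alpha> x))\<^sup>2)) summable_on UNIV"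
      by (rule summable_on_sum_fin[OF fin]) (use Dsum in \<open>auto intro!: summable_on_cmult_right\<close>)
  qed (use Bb p0 in auto)
  have Rge: "(\<Sum>x\<in>\<Omega>. p x * (norm (B i x))\<^sup>2)
      \<le> nnormsq c (\<lambda>x. u i x *\<^sub>R lap c \<alpha> x - 2 *\<^sub>R Gamma2 c \<alpha> (u i) x)"
    if i: "i \<in> {1..n}" for i
  proof -
    have "nnormsq c (\<lambda>x. u i x *\<^sub>R lap c \<alpha> x - 2 *\<^sub>R Gamma2 c \<alpha> (u i) x)
        = (\<Sum>\<^sub>\<infinity>x. p x * (norm (B i x))\<^sup>2)"
      unfolding nnormsq_def p_def[symmetric] using RB[OF i] by simp
    moreover have "(\<Sum>x\<in>\<Omega>. p x * (norm (B i x))\<^sup>2) \<le> (\<Sum>\<^sub>\<infinity>x. p x * (norm (B i x))\<^sup>2)"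
      by (rule finite_sum_le_infsum[OF Rs fin]) (auto simp: p0)
    ultimately show ?thesis by simp
  qed
  have Pn: "(\<Sum>x\<in>\<Omega>. p x * (norm (B i x))\<^sup>2) = (\<Sum>j=1..n. (lam j - lam i)\<^sup>2 * (norm (a i j))\<^sup>2)"
    if i: "i \<in> {1..n}" for i
  proof -
    have "(\<Sum>x\<in>\<Omega>. p x * (norm (B i x))\<^sup>2) = (\<Sum>x\<in>\<Omega>. p x * inner (B i x) (B i x))"
      by (simp add: power2_norm_eq_inner)
    also have "\<dots> = (\<Sum>j=1..n. inner (\<Sum>x\<in>\<Omega>. (p x * u j x) *\<^sub>R B i x) (\<Sum>y\<in>\<Omega>. (p y * u j y) *\<^sub>R B i y))"
      by (rule parseval[OF fin compl, symmetric])
    also have "\<dots> = (\<Sum>j=1..n. inner ((lam j - lam i) *\<^sub>R a i j) ((lam j - lam i) *\<^sub>R a i j))"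
    proof (intro sum.cong refl)
      fix j assume j: "j \<in> {1..n}"
      show "inner (\<Sum>x\<in>\<Omega>. (p x * u j x) *\<^sub>R B i x) (\<Sum>y\<in>\<Omega>. (p y * u j y) *\<^sub>R B i y)
          = inner ((lam j - lam i) *\<^sub>R a i j) ((lam j - lam i) *\<^sub>R a i j)"
        using L5[OF i j] by simp
    qed
    also have "\<dots> = (\<Sum>j=1..n. (lam j - lam i)\<^sup>2 * (norm (a i j))\<^sup>2)"
      by (intro sum.cong refl) (simp add: power2_norm_eq_inner[symmetric] power2_eq_square mult_ac)
    finally show ?thesis .
  qed
  have T2: "(\<Sum>x\<in>\<Omega>. p x * inner (B i x) (u i x *\<^sub>R \<alpha> x))
      = (1/2) * (\<Sum>x\<in>\<Omega>. \<Sum>y\<in>\<Omega>. u i x * u i y * (c x y * (norm (\<alpha> x - \<alpha> y))\<^sup>2))" for i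
  proof -
    define h where "h x y = c x y * u i x * u i y" for x y
    have hsym: "h x y = h y x" for x y by (simp add: h_def csym[of x y] mult_ac)
    have "(\<Sum>x\<in>\<Omega>. p x * inner (B i x) (u i x *\<^sub>R \<alpha> x))
        = (\<Sum>x\<in>\<Omega>. \<Sum>y\<in>\<Omega>. h x y * inner (\<alpha> x - \<alpha> y) (\<alpha> x))"
    proof (intro sum.cong refl)
      fix x assume x: "x \<in> \<Omega>"
      show "p x * inner (B i x) (u i x *\<^sub>R \<alpha> x) = (\<Sum>y\<in>\<Omega>. h x y * inner (\<alpha> x - \<alpha> y) (\<alpha> x))"
        unfolding B_def inner_sum_left sum_distrib_left inner_scaleR_left inner_scaleR_right
        by (intro sum.cong refl) (use ppos[OF x] in \<open>simp add: h_def field_simps\<close>)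
    qed
    also have "\<dots> = (1/2) * (\<Sum>x\<in>\<Omega>. \<Sum>y\<in>\<Omega>. h x y * (norm (\<alpha> x - \<alpha> y))\<^sup>2)"
    proof -
      let ?S = "(\<Sum>x\<in>\<Omega>. \<Sum>y\<in>\<Omega>. h x y * inner (\<alpha> x - \<alpha> y) (\<alpha> x))"
      have "?S = (\<Sum>y\<in>\<Omega>. \<Sum>x\<in>\<Omega>. h x y * inner (\<alpha> x - \<alpha> y) (\<alpha> x))" by (rule sum.swap)
      also have "\<dots> = (\<Sum>x\<in>\<Omega>. \<Sum>y\<in>\<Omega>. h x y * inner (\<alpha> y - \<alpha> x) (\<alpha> y))"
        by (intro sum.cong refl) (metis hsym)
      finally have "2 * ?S = ?S + (\<Sum>x\<in>\<Omega>. \<Sum>y\<in>\<Omega>. h x y * inner (\<alpha> y - \<alpha> x) (\<alpha> y))" by simp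
      also have "\<dots> = (\<Sum>x\<in>\<Omega>. \<Sum>y\<in>\<Omega>. h x y * (norm (\<alpha> x - \<alpha> y))\<^sup>2)"
        unfolding sum.distrib[symmetric] by (intro sum.cong refl)
          (simp add: power2_norm_eq_inner inner_diff_left inner_diff_right inner_commute algebra_simps)
      finally show ?thesis by simp
    qed
    finally show ?thesis by (simp add: h_def mult_ac)
  qed
  have Teq: "Gamma_u2 c \<alpha> (u i) - Lambda c \<alpha> (u i) = (\<Sum>j=1..n. (lam j - lam i) * (norm (a i j))\<^sup>2)"
    if i: "i \<in> {1..n}" for i
  proof -
    have "Gamma_u2 c \<alpha> (u i) - Lambda c \<alpha> (u i) = (\<Sum>x\<in>\<Omega>. p x * inner (B i x) (u i x *\<^sub>R \<alpha> x))"
    proof -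
      have "Gamma_u2 c \<alpha> (u i) - Lambda c \<alpha> (u i)
          = (1/2) * (\<Sum>x\<in>\<Omega>. \<Sum>y\<in>\<Omega>. u i x * u i y * (c x y * (norm (\<alpha> x - \<alpha> y))\<^sup>2))"
        by (rule T1_lemma[OF net fin Dsum]) (use van[OF i] ppos' in auto)
      then show ?thesis using T2[of i] by simp
    qed
    also have "\<dots> = (\<Sum>j=1..n. inner (\<Sum>x\<in>\<Omega>. (p x * u j x) *\<^sub>R B i x) (\<Sum>y\<in>\<Omega>. (p y * u j y) *\<^sub>R (u i y *\<^sub>R \<alpha> y)))"
      by (rule parseval[OF fin compl, symmetric])
    also have "\<dots> = (\<Sum>j=1..n. inner ((lam j - lam i) *\<^sub>R a i j) (a i j))"
    proof (intro sum.cong refl)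
      fix j assume j: "j \<in> {1..n}"
      have "(\<Sum>y\<in>\<Omega>. (p y * u j y) *\<^sub>R (u i y *\<^sub>R \<alpha> y)) = a i j"
        unfolding a_def by (intro sum.cong refl) (simp add: mult_ac)
      then show "inner (\<Sum>x\<in>\<Omega>. (p x * u j x) *\<^sub>R B i x) (\<Sum>y\<in>\<Omega>. (p y * u j y) *\<^sub>R (u i y *\<^sub>R \<alpha> y))
          = inner ((lam j - lam i) *\<^sub>R a i j) (a i j)" using L5[OF i j] by simp
    qed
    also have "\<dots> = (\<Sum>j=1..n. (lam j - lam i) * (norm (a i j))\<^sup>2)" by (simp add: power2_norm_eq_inner)
    finally show ?thesis .
  qed
  show ?thesis
  proof (rule final_ineq[where w = "\<lambda>i j. (norm (a i j))\<^sup>2"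
        and T = "\<lambda>i. Gamma_u2 c \<alpha> (u i) - Lambda c \<alpha> (u i)"
        and R = "\<lambda>i. nnormsq c (\<lambda>x. u i x *\<^sub>R lap c \<alpha> x - 2 *\<^sub>R Gamma2 c \<alpha> (u i) x)"])
    show "k < n" by (rule kn)
    show "\<And>i j. 1 \<le> i \<Longrightarrow> i \<le> j \<Longrightarrow> j \<le> n \<Longrightarrow> lam i \<le> lam j" by (rule mono)
    show "\<And>i j. (norm (a i j))\<^sup>2 = (norm (a j i))\<^sup>2" by (metis asym)
    show "\<And>i j. 0 \<le> (norm (a i j))\<^sup>2" by simp
    show "\<And>i. i \<in> {1..k} \<Longrightarrow> Gamma_u2 c \<alpha> (u i) - Lambda c \<alpha> (u i) = (\<Sum>j=1..n. (lam j - lam i) * (norm (a i j))\<^sup>2)"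
      using Teq kn by auto
    show "\<And>i. i \<in> {1..k} \<Longrightarrow> (\<Sum>j=1..n. (lam j - lam i)\<^sup>2 * (norm (a i j))\<^sup>2)
        \<le> nnormsq c (\<lambda>x. u i x *\<^sub>R lap c \<alpha> x - 2 *\<^sub>R Gamma2 c \<alpha> (u i) x)"
    proof -
      fix i assume "i \<in> {1..k}"
      then have i: "i \<in> {1..n}" using kn by auto
      show "(\<Sum>j=1..n. (lam j - lam i)\<^sup>2 * (norm (a i j))\<^sup>2)
        \<le> nnormsq c (\<lambda>x. u i x *\<^sub>R lap c \<alpha> x - 2 *\<^sub>R Gamma2 c \<alpha> (u i) x)"
        using Pn[OF i] Rge[OF i] by simp
    qed
  qed
qed


end
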